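(* Let $\mathscr{S}$ be a relaxed scenario without HGT-edges. Then $G_{=}(\mathscr{S})$ is a cograph.
   Context: All trees are planted phylogenetic trees: a tree $T$ has a distinguished vertex $0_T$ of degree $1$ whose unique neighbor $\rho_T$ is the root, and every vertex other than $0_T$ and the leaves $L(T)$ has at least two children. For $x,y\in V(T)$ write $y\preceq_T x$ if $x$ lies on the path from $0_T$ to $y$; edges are written $uv$ with $v\prec_T u$. The order extends to $V(T)\cup E(T)$: for a vertex $x$ and an edge $e=uv$, $x\preceq_T e$ iff $x\preceq_T v$, and $e\preceq_T x$ iff $u\preceq_T x$; for edges, $uv\preceq_T ab$ iff $v\preceq_T b$. Two elements are comparable if one is $\preceq$ the other. $\mathrm{lca}_T$ denotes the last common ancestor. A time map for $T$ is $\tau_T\colon V(T)\to\mathbb{R}$ with $\tau_T(x)<\tau_T(y)$ whenever $x\prec_T y$. A relaxed scenario $\mathscr{S}=(T,S,\sigma,\mu,\tau_T,\tau_S)$ consists of a gene tree $T$ with time map $\tau_T$, a species tree $S$ with time map $\tau_S$, a map $\sigma\colon L(T)\to M$ with $M\subseteq L(S)$, and a map $\mu\colon V(T)\to V(S)\cup E(S)$ such that (S0) $\mu(x)=0_S$ iff $x=0_T$; (S1) $\mu(x)\in L(S)$ iff $x\in L(T)$, in which case $\mu(x)=\sigma(x)$; (S2) if $\mu(x)\in V(S)$ then $\tau_S(\mu(x))=\tau_T(x)$; (S3) if $\mu(x)=uv\in E(S)$ then $\tau_S(v)<\tau_T(x)<\tau_S(u)$. The EDT graph $G_{=}(\mathscr{S})$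 has vertex set $L(T)$ and an edge $xy$ ($x\ne y$) iff $\tau_T(\mathrm{lca}_T(x,y))=\tau_S(\mathrm{lca}_S(\sigma(x),\sigma(y)))$. An edge $uv\in E(T)$ is an HGT-edge if $\mu(u)$ and $\mu(v)$ are incomparable in $S$. A cograph is a graph with no induced path on four vertices. *)

theory Defs
  imports Complex_Main
begin

record 'a ptree =
  verts :: "'a set"
  arcs  :: "('a \<times> 'a) set"
  plant :: "'a"

definition children :: "'a ptree \<Rightarrow> 'a \<Rightarrow> 'a set" where
  "children T u = {v. (u, v) \<in> arcs T}"

definition leaves :: "'a ptree \<Rightarrow> 'a set" where
  "leaves T = {v \<in> verts T. children T v = {}}"

definition prec_eq :: "'a ptree \<Rightarrow> 'a \<Rightarrow> 'a \<Rightarrow> bool" where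
  "prec_eq T y x \<longleftrightarrow> x \<in> verts T \<and> y \<in> verts T \<and> (x, y) \<in> (arcs T)\<^sup>*"

definition prec :: "'a ptree \<Rightarrow> 'a \<Rightarrow> 'a \<Rightarrow> bool" where
  "prec T y x \<longleftrightarrow> prec_eq T y x \<and> y \<noteq> x"

definition planted_phylo_tree :: "'a ptree \<Rightarrow> bool" where
  "planted_phylo_tree T \<longleftrightarrow>
     finite (verts T) \<and> plant T \<in> verts T \<and> arcs T \<subseteq> verts T \<times> verts T \<and>
     (\<forall>v. (v, plant T) \<notin> arcs T) \<and>
     (\<forall>v \<in> verts T. v \<noteq> plant T \<longrightarrow> (\<exists>!u. (u, v) \<in> arcs T)) \<and>
     (\<forall>v \<in> verts T. (plant T, v) \<in> (arcs T)\<^sup>*) \<and>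
     card (children T (plant T)) = 1 \<and>
     (\<forall>v \<in> verts T. v \<noteq> plant T \<and> v \<notin> leaves T \<longrightarrow> card (children T v) \<ge> 2)"

definition root :: "'a ptree \<Rightarrow> 'a" where
  "root T = (THE r. (plant T, r) \<in> arcs T)"

definition lca :: "'a ptree \<Rightarrow> 'a \<Rightarrow> 'a \<Rightarrow> 'a" where
  "lca T x y = (THE z. prec_eq T x z \<and> prec_eq T y z \<and>
                   (\<forall>w. prec_eq T x w \<and> prec_eq T y w \<longrightarrow> prec_eq T z w))"

text \<open>Elements of V(T) \<union> E(T): Inl v for a vertex, Inr (u,v) for an edge uv.\<close>
type_synonym 'a elem = "'a + ('a \<times> 'a)"

definition is_elem :: "'a ptree \<Rightarrow> 'a elem \<Rightarrow> bool" where
  "is_elem T a \<longleftrightarrow> (case a of Inl v \<Rightarrow> v \<in> verts T | Inr e \<Rightarrow> e \<in> arcs T)"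

fun elem_prec_eq :: "'a ptree \<Rightarrow> 'a elem \<Rightarrow> 'a elem \<Rightarrow> bool" where
  "elem_prec_eq T (Inl x) (Inl y) = prec_eq T x y"
| "elem_prec_eq T (Inl x) (Inr (u, v)) = ((u, v) \<in> arcs T \<and> prec_eq T x v)"
| "elem_prec_eq T (Inr (u, v)) (Inl x) = ((u, v) \<in> arcs T \<and> prec_eq T u x)"
| "elem_prec_eq T (Inr (u, v)) (Inr (a, b)) = ((u, v) \<in> arcs T \<and> (a, b) \<in> arcs T \<and> prec_eq T v b)"

definition comparable :: "'a ptree \<Rightarrow> 'a elem \<Rightarrow> 'a elem \<Rightarrow> bool" where
  "comparable T a b \<longleftrightarrow> elem_prec_eq T a b \<or> elem_prec_eq T b a"

definition time_map :: "'a ptree \<Rightarrow> ('a \<Rightarrow> real) \<Rightarrow> bool" where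
  "time_map T \<tau> \<longleftrightarrow> (\<forall>x y. prec T x y \<longrightarrow> \<tau> x < \<tau> y)"

definition relaxed_scenario ::
  "'g ptree \<Rightarrow> 's ptree \<Rightarrow> ('g \<Rightarrow> 's) \<Rightarrow> ('g \<Rightarrow> 's elem) \<Rightarrow> ('g \<Rightarrow> real) \<Rightarrow> ('s \<Rightarrow> real) \<Rightarrow> bool"
where
  "relaxed_scenario T S \<sigma> \<mu> \<tau>T \<tau>S \<longleftrightarrow>
     planted_phylo_tree T \<and> planted_phylo_tree S \<and> time_map T \<tau>T \<and> time_map S \<tau>S \<and>
     \<sigma> ` leaves T \<subseteq> leaves S \<and>
     (\<forall>x \<in> verts T. is_elem S (\<mu> x)) \<and>
     (\<forall>x \<in> verts T. \<mu> x = Inl (plant S) \<longleftrightarrow> x = plant T) \<and>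
     (\<forall>x \<in> verts T. \<mu> x \<in> Inl ` leaves S \<longleftrightarrow> x \<in> leaves T) \<and>
     (\<forall>x \<in> leaves T. \<mu> x = Inl (\<sigma> x)) \<and>
     (\<forall>x \<in> verts T. \<forall>w. \<mu> x = Inl w \<longrightarrow> \<tau>S w = \<tau>T x) \<and>
     (\<forall>x \<in> verts T. \<forall>u v. \<mu> x = Inr (u, v) \<longrightarrow> \<tau>S v < \<tau>T x \<and> \<tau>T x < \<tau>S u)"

definition HGT_edge ::
  "'g ptree \<Rightarrow> 's ptree \<Rightarrow> ('g \<Rightarrow> 's elem) \<Rightarrow> 'g \<times> 'g \<Rightarrow> bool" where
  "HGT_edge T S \<mu> e \<longleftrightarrow> e \<in> arcs T \<and> \<not> comparable S (\<mu> (fst e)) (\<mu> (snd e))"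

definition EDT_edge ::
  "'g ptree \<Rightarrow> 's ptree \<Rightarrow> ('g \<Rightarrow> 's) \<Rightarrow> ('g \<Rightarrow> real) \<Rightarrow> ('s \<Rightarrow> real) \<Rightarrow> 'g \<Rightarrow> 'g \<Rightarrow> bool" where
  "EDT_edge T S \<sigma> \<tau>T \<tau>S x y \<longleftrightarrow>
     x \<in> leaves T \<and> y \<in> leaves T \<and> x \<noteq> y \<and>
     \<tau>T (lca T x y) = \<tau>S (lca S (\<sigma> x) (\<sigma> y))"

definition cograph :: "'a set \<Rightarrow> ('a \<Rightarrow> 'a \<Rightarrow> bool) \<Rightarrow> bool" where
  "cograph V E \<longleftrightarrow> \<not> (\<exists>a\<in>V. \<exists>b\<in>V. \<exists>c\<in>V. \<exists>d\<in>V.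
      distinct [a, b, c, d] \<and> E a b \<and> E b c \<and> E c d \<and> \<not> E a c \<and> \<not> E b d \<and> \<not> E a d)"

end

theory Submission
  imports Defs
begin

lemma pt_arcs: "planted_phylo_tree T \<Longrightarrow> (u,v) \<in> arcs T \<Longrightarrow> u \<in> verts T \<and> v \<in> verts T"
  unfolding planted_phylo_tree_def by blast

lemma pt_parent_unique:
  assumes "planted_phylo_tree T" "(u,v) \<in> arcs T" "(u',v) \<in> arcs T" shows "u = u'"
proof -
  have "v \<in> verts T" "v \<noteq> plant T" using assms unfolding planted_phylo_tree_def by blast+
  then show ?thesis using assms unfolding planted_phylo_tree_def by blast
qed

lemma pt_noloop:
  assumes "planted_phylo_tree T" shows "(v,v) \<notin> arcs T"
proof
  assume a: "(v,v) \<in> arcs T"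
  then have "v \<in> verts T" using pt_arcs assms by fast
  then have r: "(plant T, v) \<in> (arcs T)\<^sup>*" using assms unfolding planted_phylo_tree_def by blast
  have "(w,w) \<notin> arcs T" if "(plant T, w) \<in> (arcs T)\<^sup>*" for w
    using that
  proof (induction rule: rtrancl_induct)
    case base
    then show ?case using assms unfolding planted_phylo_tree_def by blast
  next
    case (step y z)
    then show ?case using pt_parent_unique[OF assms] by metis
  qed
  with r a show False by blast
qed

lemma prec_eq_refl: "v \<in> verts T \<Longrightarrow> prec_eq T v v"
  unfolding prec_eq_def by simp

lemma prec_eq_trans: "prec_eq T x y \<Longrightarrow> prec_eq T y z \<Longrightarrow> prec_eq T x z"
  unfolding prec_eq_def by (meson rtrancl_trans)

lemma arc_prec_eq: "planted_phylo_tree T \<Longrightarrow> (u,v) \<in> arcs T \<Longrightarrow> prec_eq T v u"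
  unfolding prec_eq_def using pt_arcs by fastforce

lemma arc_prec: "planted_phylo_tree T \<Longrightarrow> (u,v) \<in> arcs T \<Longrightarrow> prec T v u"
  unfolding prec_def using arc_prec_eq pt_noloop by fastforce

lemma tm_mono: "time_map T \<tau> \<Longrightarrow> prec_eq T x y \<Longrightarrow> \<tau> x \<le> \<tau> y"
  unfolding time_map_def prec_def by (metis order.order_iff_strict)

lemma tm_antisym: "time_map T \<tau> \<Longrightarrow> prec_eq T x y \<Longrightarrow> prec_eq T y x \<Longrightarrow> x = y"
  unfolding time_map_def prec_def by (metis order.asym)

lemma rt_total:
  assumes "(a,y) \<in> R\<^sup>*" "(b,y) \<in> R\<^sup>*" "\<And>u u' v. (u,v) \<in> R \<Longrightarrow> (u',v) \<in> R \<Longrightarrow> u = u'"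
  shows "(a,b) \<in> R\<^sup>* \<or> (b,a) \<in> R\<^sup>*"
  using assms(1,2)
proof (induction arbitrary: b rule: rtrancl_induct)
  case base
  then show ?case by blast
next
  case (step y z)
  from step.prems show ?case
  proof (cases rule: rtranclE)
    case base
    then show ?thesis using step by (meson rtrancl.rtrancl_into_rtrancl)
  next
    case (step w)
    then have "w = y" using assms(3) \<open>(y,z) \<in> R\<close> by blast
    then show ?thesis using step.IH step by blast
  qed
qed

lemma anc_total:
  assumes "planted_phylo_tree T" "prec_eq T y a" "prec_eq T y b"
  shows "prec_eq T a b \<or> prec_eq T b a"
  using assms rt_total[of a y "arcs T" b] pt_parent_unique[OF assms(1)]
  unfolding prec_eq_def by blast

lemma lca_prop:
  assumes pt: "planted_phylo_tree T" and tm: "time_map T \<tau>" and xy: "x \<in> verts T" "y \<in> verts T"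
  shows "prec_eq T x (lca T x y) \<and> prec_eq T y (lca T x y) \<and>
         (\<forall>w. prec_eq T x w \<and> prec_eq T y w \<longrightarrow> prec_eq T (lca T x y) w)"
proof -
  define C where "C = {z. prec_eq T x z \<and> prec_eq T y z}"
  have fin: "finite C" using pt unfolding C_def planted_phylo_tree_def prec_eq_def
    by (metis (no_types, lifting) mem_Collect_eq rev_finite_subset subsetI)
  have "plant T \<in> C" using pt xy unfolding C_def planted_phylo_tree_def prec_eq_def by blast
  then have ne: "C \<noteq> {}" by blast
  define m where "m = Min (\<tau> ` C)"
  have "m \<in> \<tau> ` C" unfolding m_def using fin ne by simp
  then obtain z where zC: "z \<in> C" and zm: "\<tau> z = m" by blast
  have zmin: "\<tau> z \<le> \<tau> w" if "w \<in> C" for w using fin that zm unfolding m_def by simp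
  have P: "prec_eq T z w" if "w \<in> C" for w
  proof -
    have "prec_eq T z w \<or> prec_eq T w z" using anc_total[OF pt] zC that unfolding C_def by blast
    moreover have "\<not> prec T w z" using zmin[OF that] tm unfolding time_map_def by force
    ultimately show ?thesis unfolding prec_def using prec_eq_refl zC unfolding C_def prec_eq_def by blast
  qed
  have ex: "\<exists>!z. prec_eq T x z \<and> prec_eq T y z \<and> (\<forall>w. prec_eq T x w \<and> prec_eq T y w \<longrightarrow> prec_eq T z w)"
  proof
    show "prec_eq T x z \<and> prec_eq T y z \<and> (\<forall>w. prec_eq T x w \<and> prec_eq T y w \<longrightarrow> prec_eq T z w)"
      using zC P unfolding C_def by blast
  next
    fix z' assume "prec_eq T x z' \<and> prec_eq T y z' \<and> (\<forall>w. prec_eq T x w \<and> prec_eq T y w \<longrightarrow> prec_eq T z' w)"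
    then show "z' = z" using zC P tm_antisym[OF tm] unfolding C_def by blast
  qed
  show ?thesis unfolding lca_def using theI'[OF ex] .
qed

lemma lca_sym: "lca T x y = lca T y x"
  unfolding lca_def by (simp add: conj_commute conj_left_commute)

lemma lca_ultra:
  assumes pt: "planted_phylo_tree T" and tm: "time_map T \<tau>"
    and v: "x \<in> verts T" "y \<in> verts T" "z \<in> verts T"
  shows "\<tau> (lca T x z) \<le> max (\<tau> (lca T x y)) (\<tau> (lca T y z))"
proof -
  note L = lca_prop[OF pt tm]
  have "prec_eq T (lca T x y) (lca T y z) \<or> prec_eq T (lca T y z) (lca T x y)"
    using anc_total[OF pt] L v by blast
  then show ?thesis
  proof
    assume h: "prec_eq T (lca T x y) (lca T y z)"
    have "prec_eq T (lca T x z) (lca T y z)"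
      using L[of x z] L[of x y] L[of y z] v h prec_eq_trans by meson
    then show ?thesis using tm_mono[OF tm] by fastforce
  next
    assume h: "prec_eq T (lca T y z) (lca T x y)"
    have "prec_eq T (lca T x z) (lca T x y)"
      using L[of x z] L[of x y] L[of y z] v h prec_eq_trans by meson
    then show ?thesis using tm_mono[OF tm] by fastforce
  qed
qed


lemma elem_refl: "planted_phylo_tree T \<Longrightarrow> is_elem T A \<Longrightarrow> elem_prec_eq T A A"
  by (cases A) (auto simp: is_elem_def prec_eq_refl dest: pt_arcs)

lemma arc_parent:
  assumes pt: "planted_phylo_tree T" and a: "(p,q) \<in> arcs T" and h: "prec_eq T q q'" "q \<noteq> q'"
  shows "prec_eq T p q'"
proof -
  have "(q',q) \<in> (arcs T)\<^sup>*" using h unfolding prec_eq_def by blast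
  then obtain r where "(q',r) \<in> (arcs T)\<^sup>*" "(r,q) \<in> arcs T" using h(2)
    by (metis rtranclE)
  moreover then have "r = p" using pt_parent_unique[OF pt] a by blast
  ultimately show ?thesis using h a pt_arcs[OF pt] unfolding prec_eq_def by blast
qed

lemma elem_trans:
  assumes pt: "planted_phylo_tree T" and "elem_prec_eq T A B" "elem_prec_eq T B C"
  shows "elem_prec_eq T A C"
  using assms(2,3)
  apply (cases A; cases B; cases C)
  apply (auto intro: prec_eq_trans)
    apply (meson arc_prec_eq[OF pt] prec_eq_trans)+
  apply (metis arc_parent[OF pt] arc_prec_eq[OF pt] prec_eq_trans pt_parent_unique[OF pt])
  done

lemma elem_time:
  assumes pt: "planted_phylo_tree T" and tm: "time_map T \<tau>"
    and le: "elem_prec_eq T A B" and ne: "A \<noteq> B"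
    and As: "\<forall>w. A = Inl w \<longrightarrow> \<tau> w = s" "\<forall>p q. A = Inr (p,q) \<longrightarrow> \<tau> q < s \<and> s < \<tau> p"
    and Bt: "\<forall>w. B = Inl w \<longrightarrow> \<tau> w = t" "\<forall>p q. B = Inr (p,q) \<longrightarrow> \<tau> q < t \<and> t < \<tau> p"
  shows "s < t"
proof (cases A)
  case (Inl x)
  show ?thesis
  proof (cases B)
    case (Inl y)
    then show ?thesis using \<open>A = Inl x\<close> le ne As Bt tm unfolding time_map_def prec_def by auto
  next
    case (Inr e)
    then obtain p q where "B = Inr (p,q)" by (cases e) auto
    then show ?thesis using \<open>A = Inl x\<close> le As Bt tm_mono[OF tm, of x q] by force
  qed
next
  case (Inr e)
  then obtain p q where Aq: "A = Inr (p,q)" by (cases e) auto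
  show ?thesis
  proof (cases B)
    case (Inl y)
    then show ?thesis using Aq le As Bt tm_mono[OF tm, of p y] by force
  next
    case (Inr e')
    then obtain p' q' where Bq: "B = Inr (p',q')" by (cases e') auto
    have a: "(p,q) \<in> arcs T" "(p',q') \<in> arcs T" "prec_eq T q q'" using le Aq Bq by auto
    have "q \<noteq> q'" using pt_parent_unique[OF pt] a ne Aq Bq by blast
    then have "prec_eq T p q'" using arc_parent[OF pt a(1) a(3)] by blast
    then show ?thesis using As Bt Aq Bq tm_mono[OF tm, of p q'] by force
  qed
qed


lemma no_P4:
  fixes DT DS :: "'a \<Rightarrow> 'a \<Rightarrow> real"
  assumes symT: "\<And>x y. DT x y = DT y x" and symS: "\<And>x y. DS x y = DS y x"
    and uT: "\<And>x y z. x \<in> V \<Longrightarrow> y \<in> V \<Longrightarrow> z \<in> V \<Longrightarrow> DT x z \<le> max (DT x y) (DT y z)"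
    and uS: "\<And>x y z. x \<in> V \<Longrightarrow> y \<in> V \<Longrightarrow> z \<in> V \<Longrightarrow> DS x z \<le> max (DS x y) (DS y z)"
    and le: "\<And>x y. x \<in> V \<Longrightarrow> y \<in> V \<Longrightarrow> DS x y \<le> DT x y"
    and V: "a \<in> V" "b \<in> V" "c \<in> V" "d \<in> V"
    and e: "DT a b = DS a b" "DT b c = DS b c" "DT c d = DS c d"
    and ne: "DT a c \<noteq> DS a c" "DT b d \<noteq> DS b d" "DT a d \<noteq> DS a d"
  shows False
proof -
  have 1: "DT a b = DT b c"
  proof (rule ccontr)
    assume "DT a b \<noteq> DT b c"
    then show False using uT[of a b c] uT[of a c b] uT[of b a c] uS[of a b c] uS[of a c b] uS[of b a c]
        le[of a c] e ne V symT[of a c] symS[of a c] symT[of a b] symS[of a b] symT[of b c] symS[of b c]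
      by (smt (verit))
  qed
  have 2: "DT b c = DT c d"
  proof (rule ccontr)
    assume "DT b c \<noteq> DT c d"
    then show False using uT[of b c d] uT[of b d c] uT[of c b d] uS[of b c d] uS[of b d c] uS[of c b d]
        le[of b d] e ne V symT[of b d] symS[of b d] symT[of b c] symS[of b c] symT[of c d] symS[of c d]
      by (smt (verit))
  qed
  have "DT a c \<le> DT a b" using uT[of a b c] 1 V by simp
  moreover have "DS a c < DT a c" using le[of a c] ne V by simp
  moreover have bd: "DT b d \<le> DT a b" using uT[of b c d] 1 2 V by simp
  moreover have "DT a d \<le> DT a b" using uT[of a b d] V bd by simp
  moreover have "DS a c < DS c d" using calculation e 1 2 by linarith
  moreover have "DS a d \<ge> DS c d" using uS[of c a d] symS[of c a] V calculation by simp
  moreover have "DS a d \<le> max (DS a c) (DS c d)" using uS[of a c d] V by simp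
  ultimately show False using le[of a d] V e ne 1 2
    by (smt (verit))
qed


lemma DS_le_DT:
  assumes rs: "relaxed_scenario T S \<sigma> \<mu> \<tau>T \<tau>S"
    and nh: "\<forall>e \<in> arcs T. \<not> HGT_edge T S \<mu> e"
    and x: "x \<in> leaves T" and y: "y \<in> leaves T"
  shows "\<tau>S (lca S (\<sigma> x) (\<sigma> y)) \<le> \<tau>T (lca T x y)"
proof -
  have ptT: "planted_phylo_tree T" and ptS: "planted_phylo_tree S"
    and tmT: "time_map T \<tau>T" and tmS: "time_map S \<tau>S"
    and sig: "\<sigma> ` leaves T \<subseteq> leaves S"
    and el: "\<forall>x \<in> verts T. is_elem S (\<mu> x)"
    and lf: "\<forall>x \<in> leaves T. \<mu> x = Inl (\<sigma> x)"
    and tv: "\<forall>x \<in> verts T. \<forall>w. \<mu> x = Inl w \<longrightarrow> \<tau>S w = \<tau>T x"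
    and te: "\<forall>x \<in> verts T. \<forall>u v. \<mu> x = Inr (u, v) \<longrightarrow> \<tau>S v < \<tau>T x \<and> \<tau>T x < \<tau>S u"
    using rs unfolding relaxed_scenario_def by blast+
  have arc: "elem_prec_eq S (\<mu> v) (\<mu> u)" if a: "(u,v) \<in> arcs T" for u v
  proof (rule ccontr)
    assume n: "\<not> elem_prec_eq S (\<mu> v) (\<mu> u)"
    have "comparable S (\<mu> u) (\<mu> v)" using nh a unfolding HGT_edge_def by auto
    then have le: "elem_prec_eq S (\<mu> u) (\<mu> v)" using n unfolding comparable_def by blast
    have ne: "\<mu> u \<noteq> \<mu> v" using le n by metis
    have uv: "u \<in> verts T" "v \<in> verts T" using pt_arcs[OF ptT a] by auto
    have "\<tau>T u < \<tau>T v"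
      by (rule elem_time[OF ptS tmS le ne]) (use tv te uv in blast)+
    moreover have "\<tau>T v < \<tau>T u" using arc_prec[OF ptT a] tmT unfolding time_map_def by blast
    ultimately show False by simp
  qed
  have mono: "elem_prec_eq S (\<mu> w) (\<mu> z)" if "(z,w) \<in> (arcs T)\<^sup>*" "z \<in> verts T" for z w
    using that(1)
  proof (induction rule: rtrancl_induct)
    case base
    then show ?case using elem_refl[OF ptS] el that(2) by blast
  next
    case (step y w)
    then show ?case using arc elem_trans[OF ptS] by blast
  qed
  have xv: "x \<in> verts T" "y \<in> verts T" using x y unfolding leaves_def by auto
  define z where "z = lca T x y"
  have L: "prec_eq T x z" "prec_eq T y z" using lca_prop[OF ptT tmT xv] z_def by auto
  have zv: "z \<in> verts T" using L unfolding prec_eq_def by blast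
  have mx: "elem_prec_eq S (Inl (\<sigma> x)) (\<mu> z)" "elem_prec_eq S (Inl (\<sigma> y)) (\<mu> z)"
    using mono[of z x] mono[of z y] L zv lf x y unfolding prec_eq_def by auto
  have sv: "\<sigma> x \<in> verts S" "\<sigma> y \<in> verts S" using sig x y unfolding leaves_def by auto
  note LS = lca_prop[OF ptS tmS sv]
  show ?thesis
  proof (cases "\<mu> z")
    case (Inl w)
    then have "prec_eq S (lca S (\<sigma> x) (\<sigma> y)) w" using mx LS by auto
    then show ?thesis using tm_mono[OF tmS] tv zv Inl z_def by fastforce
  next
    case (Inr e)
    then obtain p q where pq: "\<mu> z = Inr (p,q)" by (cases e) auto
    then have "prec_eq S (lca S (\<sigma> x) (\<sigma> y)) q" using mx LS by auto
    then show ?thesis using tm_mono[OF tmS] te zv pq z_def by fastforce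
  qed
qed

theorem lemma21:
  fixes T :: "'g ptree" and S :: "'s ptree"
    and \<sigma> :: "'g \<Rightarrow> 's" and \<mu> :: "'g \<Rightarrow> 's elem"
    and \<tau>T :: "'g \<Rightarrow> real" and \<tau>S :: "'s \<Rightarrow> real"
  assumes "relaxed_scenario T S \<sigma> \<mu> \<tau>T \<tau>S"
    and "\<forall>e \<in> arcs T. \<not> HGT_edge T S \<mu> e"
  shows "cograph (leaves T) (EDT_edge T S \<sigma> \<tau>T \<tau>S)"
proof -
  have ptT: "planted_phylo_tree T" and ptS: "planted_phylo_tree S"
    and tmT: "time_map T \<tau>T" and tmS: "time_map S \<tau>S"
    and sig: "\<sigma> ` leaves T \<subseteq> leaves S"
    using assms(1) unfolding relaxed_scenario_def by blast+
  define DT where "DT = (\<lambda>x y. \<tau>T (lca T x y))"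
  define DS where "DS = (\<lambda>x y. \<tau>S (lca S (\<sigma> x) (\<sigma> y)))"
  have lv: "v \<in> verts T" if "v \<in> leaves T" for v using that unfolding leaves_def by auto
  have sv: "\<sigma> v \<in> verts S" if "v \<in> leaves T" for v using that sig unfolding leaves_def by auto
  show ?thesis unfolding cograph_def
  proof
    assume "\<exists>a\<in>leaves T. \<exists>b\<in>leaves T. \<exists>c\<in>leaves T. \<exists>d\<in>leaves T.
      distinct [a, b, c, d] \<and> EDT_edge T S \<sigma> \<tau>T \<tau>S a b \<and> EDT_edge T S \<sigma> \<tau>T \<tau>S b c \<and>
      EDT_edge T S \<sigma> \<tau>T \<tau>S c d \<and> \<not> EDT_edge T S \<sigma> \<tau>T \<tau>S a c \<and>
      \<not> EDT_edge T S \<sigma> \<tau>T \<tau>S b d \<and> \<not> EDT_edge T S \<sigma> \<tau>T \<tau>S a d"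
    then obtain a b c d where V: "a \<in> leaves T" "b \<in> leaves T" "c \<in> leaves T" "d \<in> leaves T"
      and P: "distinct [a, b, c, d]" "EDT_edge T S \<sigma> \<tau>T \<tau>S a b" "EDT_edge T S \<sigma> \<tau>T \<tau>S b c"
      "EDT_edge T S \<sigma> \<tau>T \<tau>S c d" "\<not> EDT_edge T S \<sigma> \<tau>T \<tau>S a c"
      "\<not> EDT_edge T S \<sigma> \<tau>T \<tau>S b d" "\<not> EDT_edge T S \<sigma> \<tau>T \<tau>S a d"
      by blast
    show False
    proof (rule no_P4[of DT DS "leaves T" a b c d])
      show "DT x y = DT y x" for x y unfolding DT_def using lca_sym by metis
      show "DS x y = DS y x" for x y unfolding DS_def using lca_sym by metis
      show "DT x z \<le> max (DT x y) (DT y z)" if "x \<in> leaves T" "y \<in> leaves T" "z \<in> leaves T" for x y z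
        unfolding DT_def using lca_ultra[OF ptT tmT] lv that by blast
      show "DS x z \<le> max (DS x y) (DS y z)" if "x \<in> leaves T" "y \<in> leaves T" "z \<in> leaves T" for x y z
        unfolding DS_def using lca_ultra[OF ptS tmS] sv that by blast
      show "DS x y \<le> DT x y" if "x \<in> leaves T" "y \<in> leaves T" for x y
        unfolding DS_def DT_def using DS_le_DT[OF assms] that by blast
    qed (use V P in \<open>auto simp: EDT_edge_def DT_def DS_def\<close>)
  qed
qed

end
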